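(* Let $\{\lambda_j\}_{j\in\mathbb N}$ be a non-increasing sequence of non-negative reals with $\lim_{j\to\infty}\lambda_j=0$. Then $$\lim_{j\to\infty}\frac{\ln(\ln\frac1{\lambda_j})}{\ln(\ln j)}=\infty$$ holds if and only if for every $\delta>0$, $$\lim_{j\to\infty}\frac{(\ln\frac1{\lambda_j})^{\alpha}}{\ln j}=\infty\quad\text{for all }\alpha\in(0,\delta).$$
   Context: If $\lambda_j=0$, $\ln\frac1{\lambda_j}$ is interpreted as $\infty$. *)

theory Defs
  imports "HOL-Analysis.Analysis"
begin

text \<open>Extended-real valued quotients, with the convention that
  ln(1/lambda_j) = infinity when lambda_j = 0 (so both quotients are infinity then).\<close>

definition loglog_ratio :: "(nat \<Rightarrow> real) \<Rightarrow> nat \<Rightarrow> ereal" where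
  "loglog_ratio lam j =
     (if lam j = 0 then \<infinity>
      else ereal (ln (ln (1 / lam j)) / ln (ln (real j))))"

definition pow_ratio :: "real \<Rightarrow> (nat \<Rightarrow> real) \<Rightarrow> nat \<Rightarrow> ereal" where
  "pow_ratio \<alpha> lam j =
     (if lam j = 0 then \<infinity>
      else ereal ((ln (1 / lam j)) powr \<alpha> / ln (real j)))"

end

theory Submission
  imports Defs
begin

lemma ln_gt1: "(4::nat) \<le> j \<Longrightarrow> 1 < ln (real j)"
proof -
  assume j: "4 \<le> j"
  have "exp 1 \<le> (3::real)" by (rule exp_le)
  moreover have "(4::real) \<le> real j" using j by simp
  ultimately have e: "exp 1 < real j" by linarith
  have "ln (exp 1) < ln (real j)" using e j by (subst ln_less_cancel_iff) auto
  then show "1 < ln (real j)" by simp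
qed

lemma ln_ln_pos: "(4::nat) \<le> j \<Longrightarrow> ln (ln (real j)) > 0"
  using ln_gt1 by simp

lemma K1:
  fixes x a r :: real
  assumes x: "0 < x" "x < exp (-1)" and j: "4 \<le> j" and a: "a > 0"
    and h: "ln (ln (1/x)) / ln (ln (real j)) > 2 / a" and r: "ln (real j) > r"
  shows "ln (1/x) powr a / ln (real j) > r"
proof -
  define L where "L = ln (1/x)"
  define l where "l = ln (real j)"
  have ll: "ln l > 0" using ln_ln_pos[OF j] l_def by simp
  have lpos: "l > 0" using ln_gt1[OF j] l_def by simp
  have e: "exp (-1) * exp 1 = (1::real)" by (simp add: exp_add[symmetric])
  have "x * exp 1 < exp (-1) * exp 1" using x by (intro mult_strict_right_mono) auto
  hence "x * exp 1 < 1" by (simp only: e)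
  hence "exp 1 * x < 1" by (metis mult.commute)
  hence "1/x > exp 1" using x by (simp add: pos_less_divide_eq)
  hence "ln (exp 1) < ln (1/x)" using x by (subst ln_less_cancel_iff) auto
  hence L1: "L > 1" unfolding L_def by simp
  have "(2/a) * ln l < ln L" using h pos_less_divide_eq[OF ll] unfolding L_def l_def by blast
  hence "a * ((2/a) * ln l) < a * ln L" using a by (intro mult_strict_left_mono) auto
  moreover have "a * ((2/a) * ln l) = 2 * ln l" using a by simp
  ultimately have "a * ln L > 2 * ln l" by simp
  hence "exp (a * ln L) > exp (2 * ln l)" by simp
  moreover have "exp (a * ln L) = L powr a" using L1 by (simp add: powr_def mult.commute)
  moreover have "exp (2 * ln l) = l * l"
    by (simp only: mult_2 exp_add exp_ln[OF lpos])
  ultimately have "L powr a > l * l" by simp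
  hence "L powr a / l > l" using pos_less_divide_eq[OF lpos] by blast
  then show ?thesis using r unfolding L_def l_def by simp
qed

lemma K2:
  fixes x a :: real
  assumes x: "0 < x" "x < 1" and j: "4 \<le> j" and a: "a > 0"
    and h: "ln (1/x) powr a / ln (real j) > 1"
  shows "ln (ln (1/x)) / ln (ln (real j)) > 1 / a"
proof -
  define L where "L = ln (1/x)"
  define l where "l = ln (real j)"
  have ll: "ln l > 0" using ln_ln_pos[OF j] l_def by simp
  have lpos: "l > 0" using ln_gt1[OF j] l_def by simp
  have L0: "L > 0" unfolding L_def using x by simp
  have "1 * l < L powr a" using h pos_less_divide_eq[OF lpos] unfolding L_def l_def by blast
  hence "L powr a > l" by simp
  moreover have "L powr a > 0" using L0 by simp
  ultimately have "ln (L powr a) > ln l" using lpos by (subst ln_less_cancel_iff) auto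
  hence "a * ln L > ln l" using L0 by (simp add: ln_powr)
  hence "(1/a) * ln l < (1/a) * (a * ln L)" using a by (intro mult_strict_left_mono) auto
  hence "(1/a) * ln l < ln L" using a by simp
  hence "ln L / ln l > 1 / a" using pos_less_divide_eq[OF ll] by blast
  then show ?thesis unfolding L_def l_def .
qed

lemma ev_ln_gt: "eventually (\<lambda>j. ln (real j) > r) sequentially"
proof -
  have "eventually (\<lambda>j. j \<ge> nat \<lceil>exp r\<rceil> + 1) sequentially" by (rule eventually_ge_at_top)
  then show ?thesis
  proof (rule eventually_mono)
    fix j assume "j \<ge> nat \<lceil>exp r\<rceil> + 1"
    hence "real j > exp r" by linarith
    moreover have "exp r > 0" by simp
    ultimately have jp: "real j > 0" and "exp r < real j" by linarith+
    hence "ln (exp r) < ln (real j)" using \<open>exp r > 0\<close> jp by (subst ln_less_cancel_iff) auto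
    then show "ln (real j) > r" by simp
  qed
qed

theorem lemma4:
  fixes lam :: "nat \<Rightarrow> real"
  assumes nonneg: "\<forall>j. lam j \<ge> 0"
    and noninc: "decseq lam"
    and lim0: "lam \<longlonglongrightarrow> 0"
  shows "((\<lambda>j. loglog_ratio lam j) \<longlongrightarrow> \<infinity>) sequentially \<longleftrightarrow>
         (\<forall>\<delta>>0. \<forall>\<alpha>\<in>{0<..<\<delta>}. ((\<lambda>j. pow_ratio \<alpha> lam j) \<longlongrightarrow> \<infinity>) sequentially)"
proof -
  have E1: "eventually (\<lambda>j. lam j < exp (-1)) sequentially"
    using order_tendstoD(2)[OF lim0, of "exp (-1)"] by simp
  have E2: "eventually (\<lambda>j. (4::nat) \<le> j) sequentially" by (rule eventually_ge_at_top)
  show ?thesis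
  proof
    assume L: "((\<lambda>j. loglog_ratio lam j) \<longlongrightarrow> \<infinity>) sequentially"
    show "\<forall>\<delta>>0. \<forall>\<alpha>\<in>{0<..<\<delta>}. ((\<lambda>j. pow_ratio \<alpha> lam j) \<longlongrightarrow> \<infinity>) sequentially"
    proof (intro allI impI ballI)
      fix \<delta> a :: real assume "a \<in> {0<..<\<delta>}"
      hence a: "a > 0" by simp
      show "((\<lambda>j. pow_ratio a lam j) \<longlongrightarrow> \<infinity>) sequentially"
        unfolding tendsto_PInfty
      proof
        fix r
        have E3: "eventually (\<lambda>j. ereal (2/a) < loglog_ratio lam j) sequentially"
          using L unfolding tendsto_PInfty by blast
        show "eventually (\<lambda>j. ereal r < pow_ratio a lam j) sequentially"
          using E1 E2 E3 ev_ln_gt[of r]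
        proof eventually_elim
          case (elim j)
          show ?case
          proof (cases "lam j = 0")
            case True then show ?thesis by (simp add: pow_ratio_def)
          next
            case False
            hence p: "lam j > 0" using nonneg by (simp add: order_less_le)
            from elim(3) False have "ln (ln (1/lam j)) / ln (ln (real j)) > 2/a"
              by (simp add: loglog_ratio_def)
            from K1[OF p elim(1) elim(2) a this elim(4)] False show ?thesis
              by (simp add: pow_ratio_def)
          qed
        qed
      qed
    qed
  next
    assume R: "\<forall>\<delta>>0. \<forall>\<alpha>\<in>{0<..<\<delta>}. ((\<lambda>j. pow_ratio \<alpha> lam j) \<longlongrightarrow> \<infinity>) sequentially"
    show "((\<lambda>j. loglog_ratio lam j) \<longlongrightarrow> \<infinity>) sequentially"
      unfolding tendsto_PInfty
    proof
      fix r
      define M :: real where "M = max r 1 + 1"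
      have M: "M > 0" "M > r" unfolding M_def by auto
      define a where "a = 1 / M"
      have a: "a > 0" using M unfolding a_def by simp
      have "a \<in> {0<..<2*a}" using a by simp
      moreover have "2*a > 0" using a by simp
      ultimately have "((\<lambda>j. pow_ratio a lam j) \<longlongrightarrow> \<infinity>) sequentially"
        using R by blast
      hence E3: "eventually (\<lambda>j. ereal 1 < pow_ratio a lam j) sequentially"
        unfolding tendsto_PInfty by blast
      show "eventually (\<lambda>j. ereal r < loglog_ratio lam j) sequentially"
        using E1 E2 E3
      proof eventually_elim
        case (elim j)
        show ?case
        proof (cases "lam j = 0")
          case True then show ?thesis by (simp add: loglog_ratio_def)
        next
          case False
          hence p: "lam j > 0" using nonneg by (simp add: order_less_le)
          have "exp (-1::real) < 1" by simp
          hence x1: "lam j < 1" using elim(1) by linarith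
          from elim(3) False have "ln (1/lam j) powr a / ln (real j) > 1"
            by (simp add: pow_ratio_def)
          from K2[OF p x1 elim(2) a this] have "ln (ln (1/lam j)) / ln (ln (real j)) > M"
            using M unfolding a_def by simp
          with M False show ?thesis by (simp add: loglog_ratio_def)
        qed
      qed
    qed
  qed
qed

end
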